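(* Let $1\le t\le k$ be integers and let $U$ be a $t$-intersecting family of polynomials over $\mathbb{F}_q$ of degree at most $k$. Then distinct members of $U$ have distinct $(k-t+1)$-tuples of coefficients of the monomials $x^t,x^{t+1},\ldots,x^k$; i.e. the map sending a polynomial in $U$ to the tuple of its coefficients of $x^t,\ldots,x^k$ is injective on $U$.
   Context: A set $U$ of polynomials over $\mathbb{F}_q$ is $t$-intersecting if for any two $f_1,f_2\in U$ we have $|\{(x,f_1(x)):x\in\mathbb{F}_q\}\cap\{(x,f_2(x)):x\in\mathbb{F}_q\}|\ge t$. *)

theory Defs
  imports "HOL-Computational_Algebra.Polynomial"
begin

definition poly_graph :: "'a::{field,finite} poly \<Rightarrow> ('a \<times> 'a) set" where
  "poly_graph f = {(x, poly f x) | x. True}"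

definition t_intersecting :: "nat \<Rightarrow> 'a::{field,finite} poly set \<Rightarrow> bool" where
  "t_intersecting t U \<longleftrightarrow>
     (\<forall>f1\<in>U. \<forall>f2\<in>U. f1 \<noteq> f2 \<longrightarrow> card (poly_graph f1 \<inter> poly_graph f2) \<ge> t)"

end

theory Submission
  imports Defs
begin

theorem lemma4:
  fixes U :: "'a::{field,finite} poly set" and t k :: nat
  assumes "1 \<le> t" and "t \<le> k"
    and "t_intersecting t U"
    and "\<forall>f\<in>U. degree f \<le> k"
  shows "inj_on (\<lambda>f. map (coeff f) [t..<k+1]) U"
proof (rule inj_onI, rule ccontr)
  fix f1 f2 assume f1: "f1 \<in> U" and f2: "f2 \<in> U"
    and eq: "map (coeff f1) [t..<k+1] = map (coeff f2) [t..<k+1]" and ne: "f1 \<noteq> f2"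
  define g where "g = f1 - f2"
  have g0: "g \<noteq> 0" using ne by (simp add: g_def)
  have cf: "coeff g n = 0" if "n > t - 1" for n
  proof (cases "n \<le> k")
    case True
    then have "n \<in> set [t..<k+1]" using that by auto
    then have "coeff f1 n = coeff f2 n" using eq by (metis map_eq_conv)
    then show ?thesis by (simp add: g_def)
  next
    case False
    then have "degree f1 < n" "degree f2 < n" using assms(4) f1 f2 by force+
    then show ?thesis by (simp add: g_def coeff_eq_0)
  qed
  have dg: "degree g < t" using degree_le[of "t - 1" g] cf assms(1) by fastforce
  have "poly_graph f1 \<inter> poly_graph f2 = (\<lambda>x. (x, poly f1 x)) ` {x. poly g x = 0}"
    by (auto simp: poly_graph_def g_def)
  then have "card (poly_graph f1 \<inter> poly_graph f2) \<le> card {x. poly g x = 0}"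
    by (simp add: card_image_le)
  also have "\<dots> \<le> degree g" using card_poly_roots_bound[OF g0] .
  finally have "card (poly_graph f1 \<inter> poly_graph f2) < t" using dg by simp
  moreover have "card (poly_graph f1 \<inter> poly_graph f2) \<ge> t"
    using assms(3) f1 f2 ne by (auto simp: t_intersecting_def)
  ultimately show False by simp
qed

end
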